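(* Let $W$ be a complex vector space and $\phi(x,z)$ an associate of the additive formal group with $\phi(x,z)\ne x$. Then every compatible subset of $\mathcal{E}(W)$ is $\phi$-quasi compatible, and every quasi compatible subset of $\mathcal{E}(W)$ is $\phi$-quasi compatible.
   Context: $\mathcal{E}(W)=\mathrm{Hom}(W,W((x)))$. An associate is $\phi(x,z)\in\mathbb{C}((x))[[z]]$ with $\phi(x,0)=x$ and $\phi(\phi(x,x_2),x_0)=\phi(x,x_0+x_2)$; for $p\in\mathbb{C}[[x,y]]$, $p(\phi(x,z),x)\in\mathbb{C}((x))[[z]]$ is the substitution. A finite sequence $a_1(x),\dots,a_r(x)$ in $\mathcal{E}(W)$ is compatible if $\prod_{i<j}(x_i-x_j)^ka_1(x_1)\cdots a_r(x_r)\in\mathrm{Hom}(W,W((x_1,\dots,x_r)))$ for some $k\in\mathbb{N}$; quasi compatible if $\prod_{i<j}p(x_i,x_j)a_1(x_1)\cdots a_r(x_r)\in\mathrm{Hom}(W,W((x_1,\dots,x_r)))$ for some nonzero $p\in\mathbb{C}[[x,y]]$; $\phi$-quasi compatible if this holds for some $p$ with $p(\phi(x,z),x)\ne0$. A subset is (quasi, $\phi$-quasi) compatible if every finite sequence in it is. *)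

theory Defs
  imports Main "HOL-Computational_Algebra.Formal_Laurent_Series"
begin

(* A complex vector space W is a type 'w with a scalar multiplication
   sc :: complex => 'w => 'w satisfying the locale vector_space sc.

   An element a(x) of E(W) = Hom(W, W((x))) is represented by its coefficient
   function  a :: 'w => int => 'w,  where  a w n  is the coefficient of x^n
   in a(x)w. *)

definition in_E :: "(complex \<Rightarrow> 'w::ab_group_add \<Rightarrow> 'w) \<Rightarrow> ('w \<Rightarrow> int \<Rightarrow> 'w) \<Rightarrow> bool" where
  "in_E sc a \<longleftrightarrow> (\<forall>n. Vector_Spaces.linear sc sc (\<lambda>w. a w n)) \<and> (\<forall>w. \<exists>N. \<forall>n<N. a w n = 0)"

definition E_set :: "(complex \<Rightarrow> 'w::ab_group_add \<Rightarrow> 'w) \<Rightarrow> ('w \<Rightarrow> int \<Rightarrow> 'w) set" where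
  "E_set sc = {a. in_E sc a}"

(* Formal series in the variables x_1,...,x_r with coefficients in W are
   represented by coefficient functions (nat => int) => 'w, where the exponent
   of x_(l+1) is  m l  (0-based indexing).
   vo_prod as w  is the series a_1(x_1)...a_r(x_r)w: its coefficient at m is
   a_1 (... (a_r w (m (r-1))) ...) (m 0), and 0 if m has nonzero exponents
   outside the first r variables. *)
definition vo_prod :: "('w::zero \<Rightarrow> int \<Rightarrow> 'w) list \<Rightarrow> 'w \<Rightarrow> (nat \<Rightarrow> int) \<Rightarrow> 'w" where
  "vo_prod as w m =
     (if \<forall>l\<ge>length as. m l = 0
      then foldr (\<lambda>(i, a) u. a u (m i)) (zip [0..<length as] as) w
      else 0)"

(* Multiplication of a series S by p(x_i, x_j), p in C[[x,y]] given by its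
   coefficients p a b (coefficient of x^a y^b).  The coefficient sum is finite
   for all series arising here (iterated Laurent series). *)
definition mult_ser ::
  "(complex \<Rightarrow> 'w::comm_monoid_add \<Rightarrow> 'w) \<Rightarrow> (nat \<Rightarrow> nat \<Rightarrow> complex) \<Rightarrow> nat \<Rightarrow> nat \<Rightarrow>
   ((nat \<Rightarrow> int) \<Rightarrow> 'w) \<Rightarrow> ((nat \<Rightarrow> int) \<Rightarrow> 'w)" where
  "mult_ser sc p i j S m =
     (\<Sum>(a, b) \<in> {(a, b). p a b \<noteq> 0 \<and> S (m(i := m i - int a, j := m j - int b)) \<noteq> 0}.
        sc (p a b) (S (m(i := m i - int a, j := m j - int b))))"

definition pairs :: "nat \<Rightarrow> (nat \<times> nat) list" where
  "pairs r = [(i, j). j \<leftarrow> [0..<r], i \<leftarrow> [0..<j]]"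

definition mult_all ::
  "(complex \<Rightarrow> 'w::comm_monoid_add \<Rightarrow> 'w) \<Rightarrow> (nat \<Rightarrow> nat \<Rightarrow> complex) \<Rightarrow> nat \<Rightarrow>
   ((nat \<Rightarrow> int) \<Rightarrow> 'w) \<Rightarrow> ((nat \<Rightarrow> int) \<Rightarrow> 'w)" where
  "mult_all sc p r S = foldr (\<lambda>(i, j) T. mult_ser sc p i j T) (pairs r) S"

definition laurent_r :: "nat \<Rightarrow> ((nat \<Rightarrow> int) \<Rightarrow> 'w::zero) \<Rightarrow> bool" where
  "laurent_r r S \<longleftrightarrow> (\<exists>N. \<forall>m. S m \<noteq> 0 \<longrightarrow> (\<forall>l<r. N \<le> m l) \<and> (\<forall>l\<ge>r. m l = 0))"

(* prod_{i<j} p(x_i,x_j) a_1(x_1)...a_r(x_r) in Hom(W, W((x_1,...,x_r))) *)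
definition poly_kills ::
  "(complex \<Rightarrow> 'w::comm_monoid_add \<Rightarrow> 'w) \<Rightarrow> (nat \<Rightarrow> nat \<Rightarrow> complex) \<Rightarrow> ('w \<Rightarrow> int \<Rightarrow> 'w) list \<Rightarrow> bool" where
  "poly_kills sc p as \<longleftrightarrow> (\<forall>w. laurent_r (length as) (mult_all sc p (length as) (vo_prod as w)))"

definition diffpow :: "nat \<Rightarrow> nat \<Rightarrow> nat \<Rightarrow> complex" where
  "diffpow k a b = (if a + b = k then (-1) ^ b * of_nat (k choose a) else 0)"

(* p(phi(x,z), x): coefficient of z^k x^n *)
definition phi_subst :: "(nat \<Rightarrow> nat \<Rightarrow> complex) \<Rightarrow> complex fls fps \<Rightarrow> nat \<Rightarrow> int \<Rightarrow> complex" where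
  "phi_subst p \<phi> k n =
     (\<Sum>(a, b) \<in> {(a, b). p a b \<noteq> 0 \<and> fls_nth ((\<phi> ^ a) $ k) (n - int b) \<noteq> 0}.
        p a b * fls_nth ((\<phi> ^ a) $ k) (n - int b))"

definition compatible_seq :: "(complex \<Rightarrow> 'w::comm_monoid_add \<Rightarrow> 'w) \<Rightarrow> ('w \<Rightarrow> int \<Rightarrow> 'w) list \<Rightarrow> bool" where
  "compatible_seq sc as \<longleftrightarrow> (\<exists>k. poly_kills sc (diffpow k) as)"

definition quasi_compatible_seq :: "(complex \<Rightarrow> 'w::comm_monoid_add \<Rightarrow> 'w) \<Rightarrow> ('w \<Rightarrow> int \<Rightarrow> 'w) list \<Rightarrow> bool" where
  "quasi_compatible_seq sc as \<longleftrightarrow> (\<exists>p. p \<noteq> (\<lambda>_ _. 0) \<and> poly_kills sc p as)"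

definition phi_quasi_compatible_seq ::
  "(complex \<Rightarrow> 'w::comm_monoid_add \<Rightarrow> 'w) \<Rightarrow> complex fls fps \<Rightarrow> ('w \<Rightarrow> int \<Rightarrow> 'w) list \<Rightarrow> bool" where
  "phi_quasi_compatible_seq sc \<phi> as \<longleftrightarrow> (\<exists>p. phi_subst p \<phi> \<noteq> (\<lambda>_ _. 0) \<and> poly_kills sc p as)"

definition compatible_set :: "(complex \<Rightarrow> 'w::comm_monoid_add \<Rightarrow> 'w) \<Rightarrow> ('w \<Rightarrow> int \<Rightarrow> 'w) set \<Rightarrow> bool" where
  "compatible_set sc A \<longleftrightarrow> (\<forall>as. set as \<subseteq> A \<longrightarrow> compatible_seq sc as)"

definition quasi_compatible_set :: "(complex \<Rightarrow> 'w::comm_monoid_add \<Rightarrow> 'w) \<Rightarrow> ('w \<Rightarrow> int \<Rightarrow> 'w) set \<Rightarrow> bool" where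
  "quasi_compatible_set sc A \<longleftrightarrow> (\<forall>as. set as \<subseteq> A \<longrightarrow> quasi_compatible_seq sc as)"

definition phi_quasi_compatible_set ::
  "(complex \<Rightarrow> 'w::comm_monoid_add \<Rightarrow> 'w) \<Rightarrow> complex fls fps \<Rightarrow> ('w \<Rightarrow> int \<Rightarrow> 'w) set \<Rightarrow> bool" where
  "phi_quasi_compatible_set sc \<phi> A \<longleftrightarrow> (\<forall>as. set as \<subseteq> A \<longrightarrow> phi_quasi_compatible_seq sc \<phi> as)"

(* phi(phi(x,x_2),x_0): coefficient of x_0^i x_2^j x^n, where
   phi(y,x_0) = sum_i phi_i(y) x_0^i and phi_i(y) = sum_m phi_i[m] y^m is
   evaluated at y = phi(x,x_2) (negative powers via the inverse in C((x))[[x_2]]). *)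
definition assoc_lhs :: "complex fls fps \<Rightarrow> nat \<Rightarrow> nat \<Rightarrow> int \<Rightarrow> complex" where
  "assoc_lhs \<phi> i j n =
     (\<Sum>m \<in> {m. fls_nth (\<phi> $ i) m \<noteq> 0 \<and> fls_nth ((\<phi> powi m) $ j) n \<noteq> 0}.
        fls_nth (\<phi> $ i) m * fls_nth ((\<phi> powi m) $ j) n)"

(* phi(x, x_0 + x_2): coefficient of x_0^i x_2^j x^n *)
definition assoc_rhs :: "complex fls fps \<Rightarrow> nat \<Rightarrow> nat \<Rightarrow> int \<Rightarrow> complex" where
  "assoc_rhs \<phi> i j n = of_nat ((i + j) choose i) * fls_nth (\<phi> $ (i + j)) n"

definition is_associate :: "complex fls fps \<Rightarrow> bool" where
  "is_associate \<phi> \<longleftrightarrow> \<phi> $ 0 = fls_X \<and> assoc_lhs \<phi> = assoc_rhs \<phi>"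

end

theory Submission
  imports Defs
begin

lemma phi_pow_nth:
  fixes \<phi> :: "complex fls fps"
  shows "(\<phi>^a) $ K = (\<Sum>i\<le>a. of_nat (a choose i) * fls_X^(a-i) * (((\<phi> - fps_const fls_X)^i) $ K))"
proof -
  have "\<phi> = (\<phi> - fps_const fls_X) + fps_const fls_X" by simp
  hence "\<phi>^a = (\<Sum>i\<le>a. of_nat (a choose i) * (\<phi> - fps_const fls_X)^i * (fps_const fls_X)^(a-i))"
    by (metis binomial_ring)
  hence "(\<phi>^a) $ K = (\<Sum>i\<le>a. (of_nat (a choose i) * (\<phi> - fps_const fls_X)^i * fps_const (fls_X^(a-i))) $ K)"
    by (simp add: fps_sum_nth)
  also have "\<dots> = (\<Sum>i\<le>a. of_nat (a choose i) * fls_X^(a-i) * (((\<phi> - fps_const fls_X)^i) $ K))"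
    by (rule sum.cong) (simp_all add: fps_of_nat[symmetric] mult.commute mult.left_commute)
  finally show ?thesis .
qed

lemma coeff_shift:
  "fls_nth (of_nat c * fls_X^m * (D::complex fls)) j = of_nat c * fls_nth D (j - int m)"
  by (simp only: mult.assoc fls_X_power_times_conv_shift(1)) (simp add: fls_of_nat)

lemma Q_exists:
  fixes p :: "nat \<Rightarrow> nat \<Rightarrow> complex"
  assumes "p \<noteq> (\<lambda>_ _. 0)"
  shows "\<exists>i d. (\<Sum>a\<le>d. p a (d-a) * of_nat (a choose i)) \<noteq> 0"
proof -
  obtain a b where ab: "p a b \<noteq> 0" using assms by (meson ext)
  define d where "d = a + b"
  define A where "A = {a'. a' \<le> d \<and> p a' (d-a') \<noteq> 0}"
  have "a \<in> A" using ab by (simp add: A_def d_def)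
  have fA: "finite A" by (simp add: A_def)
  define m where "m = Max A"
  have mA: "m \<in> A" using fA \<open>a \<in> A\<close> m_def Max_in by blast
  have "(\<Sum>a'\<le>d. p a' (d-a') * of_nat (a' choose m)) = p m (d-m) * of_nat (m choose m)"
  proof (rule sum.remove[THEN trans])
    show "finite {..d}" by simp
    show "m \<in> {..d}" using mA by (simp add: A_def)
    have "\<forall>a'\<in>{..d} - {m}. p a' (d-a') * of_nat (a' choose m) = 0"
    proof
      fix a' assume a': "a' \<in> {..d} - {m}"
      show "p a' (d-a') * of_nat (a' choose m) = 0"
      proof (cases "a' < m")
        case True then show ?thesis by simp
      next
        case False
        then have "a' > m" using a' by auto
        then have "a' \<notin> A" using Max_ge[OF fA] m_def by (meson leD)
        then show ?thesis using a' by (simp add: A_def)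
      qed
    qed
    then have "(\<Sum>x\<in>{..d} - {m}. p x (d - x) * of_nat (x choose m)) = 0" by (rule sum.neutral)
    then show "p m (d - m) * of_nat (m choose m) + (\<Sum>x\<in>{..d} - {m}. p x (d - x) * of_nat (x choose m)) =
      p m (d - m) * of_nat (m choose m)" by simp
  qed
  also have "\<dots> \<noteq> 0" using mA by (simp add: A_def)
  finally show ?thesis by blast
qed

lemma sum_single:
  assumes "finite A" "x \<in> A" "\<And>y. y \<in> A \<Longrightarrow> y \<noteq> x \<Longrightarrow> f y = 0"
  shows "sum f A = f x"
proof -
  have "sum f A = sum f {x}" by (rule sum.mono_neutral_right) (use assms in auto)
  thus ?thesis by simp
qed

lemma main_inj:
  fixes p :: "nat \<Rightarrow> nat \<Rightarrow> complex" and \<phi> :: "complex fls fps"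
  assumes p0: "p \<noteq> (\<lambda>_ _. 0)" and h0: "\<phi> $ 0 = fls_X" and hne: "\<phi> \<noteq> fps_const fls_X"
  shows "phi_subst p \<phi> \<noteq> (\<lambda>_ _. 0)"
proof -
  define E where "E = \<phi> - fps_const fls_X"
  define s where "s = subdegree E"
  have E0: "E \<noteq> 0" using hne by (simp add: E_def)
  have "E $ 0 = 0" using h0 by (simp add: E_def)
  hence s1: "s \<ge> 1" using E0 s_def by (metis less_one not_less nth_subdegree_nonzero subdegree_eq_0_iff)
  define Q where "Q i d = (\<Sum>a\<le>d. p a (d-a) * of_nat (a choose i))" for i d
  obtain i1 d1 where "Q i1 d1 \<noteq> 0" using Q_exists[OF p0] by (auto simp: Q_def)
  hence ex: "\<exists>i. Q i \<noteq> (\<lambda>_. 0)" by metis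
  define i0 where "i0 = (LEAST i. Q i \<noteq> (\<lambda>_. 0))"
  have Qi0: "Q i0 \<noteq> (\<lambda>_. 0)" unfolding i0_def by (rule LeastI_ex[OF ex])
  have Qlt: "Q i d = 0" if "i < i0" for i d
    using not_less_Least[OF that[unfolded i0_def]] by metis
  have ex2: "\<exists>d. Q i0 d \<noteq> 0" using Qi0 by (meson ext)
  define d0 where "d0 = (LEAST d. Q i0 d \<noteq> 0)"
  have Qd0: "Q i0 d0 \<noteq> 0" unfolding d0_def by (rule LeastI_ex[OF ex2])
  have Qdlt: "Q i0 d = 0" if "d < d0" for d
    using not_less_Least[OF that[unfolded d0_def]] by metis
  define K where "K = i0 * s"
  define D where "D i = (E^i) $ K" for i
  have Dgt: "D i = 0" if "i > i0" for i
  proof -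
    have "K < i * s" using that s1 K_def by simp
    thus ?thesis unfolding D_def s_def by (rule fps_pow_nth_below_subdegree)
  qed
  have Di0: "D i0 \<noteq> 0" using E0 by (simp add: D_def K_def s_def mult.commute)
  define t0 where "t0 = fls_subdegree (D i0)"
  have Dt0: "fls_nth (D i0) t0 \<noteq> 0" using Di0 t0_def by simp
  define n where "n = t0 + int d0 - int i0"
  define L where "L = Min ((\<lambda>i. fls_subdegree (D i)) ` {..i0})"
  have DL: "fls_nth (D i) j = 0" if "i \<le> i0" "j < L" for i j
  proof (rule ccontr)
    assume "fls_nth (D i) j \<noteq> 0"
    hence "fls_subdegree (D i) \<le> j" by (rule fls_subdegree_leI)
    moreover have "L \<le> fls_subdegree (D i)" unfolding L_def using that by (intro Min_le) auto
    ultimately show False using that by simp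
  qed
  define M where "M = max d0 (nat (n + int i0 - L))"
  have key: "fls_nth ((\<phi>^a) $ K) (n - int b) = (\<Sum>i\<le>i0. of_nat (a choose i) * fls_nth (D i) (n - int b - int (a-i)))" for a b
  proof -
    have "fls_nth ((\<phi>^a) $ K) (n - int b) = (\<Sum>i\<le>a. of_nat (a choose i) * fls_nth (D i) (n - int b - int (a-i)))"
      unfolding phi_pow_nth[of \<phi> a K] fls_nth_sum coeff_shift D_def E_def by simp
    also have "\<dots> = (\<Sum>i\<le>a+i0. of_nat (a choose i) * fls_nth (D i) (n - int b - int (a-i)))"
      by (rule sum.mono_neutral_left) auto
    also have "\<dots> = (\<Sum>i\<le>i0. of_nat (a choose i) * fls_nth (D i) (n - int b - int (a-i)))"
      by (rule sum.mono_neutral_right) (auto simp: Dgt)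
    finally show ?thesis .
  qed
  have bound: "a + b \<le> M" if "p a b \<noteq> 0" "fls_nth ((\<phi>^a)$K) (n - int b) \<noteq> 0" for a b
  proof -
    from that(2) key obtain i where i: "i \<le> i0" "of_nat (a choose i) * fls_nth (D i) (n - int b - int (a-i)) \<noteq> 0"
      by (metis (no_types, lifting) atMost_iff sum.neutral)
    hence ia: "i \<le> a" by (metis binomial_eq_0 mult_eq_0_iff not_le of_nat_0)
    have "\<not> (n - int b - int (a-i) < L)" using DL[OF i(1)] i(2) by auto
    hence "L \<le> n - int b - int a + int i" using ia by simp
    thus ?thesis unfolding M_def using i(1) by linarith
  qed
  define F where "F = (\<lambda>(d,a). (a, d-a)) ` (SIGMA d:{..M}. {..d})"
  define S where "S = {(a,b). p a b \<noteq> 0 \<and> fls_nth ((\<phi>^a)$K) (n - int b) \<noteq> 0}"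
  have SF: "S \<subseteq> F"
  proof
    fix x assume "x \<in> S"
    then obtain a b where x: "x = (a,b)" "p a b \<noteq> 0" "fls_nth ((\<phi>^a)$K) (n - int b) \<noteq> 0"
      by (auto simp: S_def)
    have "a + b \<le> M" using bound x by blast
    hence "(a+b, a) \<in> (SIGMA d:{..M}. {..d})" by auto
    moreover have "x = (\<lambda>(d,a). (a, d-a)) (a+b, a)" using x by simp
    ultimately show "x \<in> F" unfolding F_def by blast
  qed
  have "phi_subst p \<phi> K n = (\<Sum>(a,b)\<in>S. p a b * fls_nth ((\<phi>^a)$K) (n - int b))"
    by (simp add: phi_subst_def S_def)
  also have "\<dots> = (\<Sum>(a,b)\<in>F. p a b * fls_nth ((\<phi>^a)$K) (n - int b))"
    by (rule sum.mono_neutral_left) (use SF in \<open>auto simp: F_def S_def\<close>)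
  also have "\<dots> = (\<Sum>(d,a)\<in>(SIGMA d:{..M}. {..d}). p a (d-a) * fls_nth ((\<phi>^a)$K) (n - int (d-a)))"
    unfolding F_def by (subst sum.reindex) (auto simp: inj_on_def intro!: sum.cong)
  also have "\<dots> = (\<Sum>(d,a)\<in>(SIGMA d:{..M}. {..d}). \<Sum>i\<le>i0. fls_nth (D i) (n - int d + int i) * (p a (d-a) * of_nat (a choose i)))"
  proof (rule sum.cong[OF refl])
    fix x assume "x \<in> (SIGMA d:{..M}. {..d})"
    then obtain d a where x: "x = (d,a)" "a \<le> d" by auto
    have "p a (d-a) * fls_nth ((\<phi>^a)$K) (n - int (d-a)) = 
      (\<Sum>i\<le>i0. p a (d-a) * (of_nat (a choose i) * fls_nth (D i) (n - int (d-a) - int (a-i))))"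
      by (simp add: key sum_distrib_left)
    also have "\<dots> = (\<Sum>i\<le>i0. fls_nth (D i) (n - int d + int i) * (p a (d-a) * of_nat (a choose i)))"
    proof (rule sum.cong[OF refl])
      fix i assume "i \<in> {..i0}"
      show "p a (d-a) * (of_nat (a choose i) * fls_nth (D i) (n - int (d-a) - int (a-i))) =
            fls_nth (D i) (n - int d + int i) * (p a (d-a) * of_nat (a choose i))"
      proof (cases "i \<le> a")
        case True
        hence "n - int (d-a) - int (a-i) = n - int d + int i" using x by simp
        thus ?thesis by (simp only:) simp
      next
        case False thus ?thesis by simp
      qed
    qed
    finally show "(case x of (d,a) \<Rightarrow> p a (d-a) * fls_nth ((\<phi>^a)$K) (n - int (d-a))) =
      (case x of (d,a) \<Rightarrow> \<Sum>i\<le>i0. fls_nth (D i) (n - int d + int i) * (p a (d-a) * of_nat (a choose i)))"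
      using x by simp
  qed
  also have "\<dots> = (\<Sum>i\<le>i0. \<Sum>(d,a)\<in>(SIGMA d:{..M}. {..d}). fls_nth (D i) (n - int d + int i) * (p a (d-a) * of_nat (a choose i)))"
    by (subst sum.swap) (simp add: case_prod_beta')
  also have "\<dots> = (\<Sum>i\<le>i0. \<Sum>d\<le>M. fls_nth (D i) (n - int d + int i) * Q i d)"
  proof (rule sum.cong[OF refl])
    fix i
    show "(\<Sum>(d,a)\<in>(SIGMA d:{..M}. {..d}). fls_nth (D i) (n - int d + int i) * (p a (d-a) * of_nat (a choose i))) =
      (\<Sum>d\<le>M. fls_nth (D i) (n - int d + int i) * Q i d)"
      by (simp add: sum.Sigma[symmetric] Q_def sum_distrib_left)
  qed
  also have "\<dots> = (\<Sum>d\<le>M. fls_nth (D i0) (n - int d + int i0) * Q i0 d)"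
    by (rule sum_single) (auto simp: Qlt)
  also have "\<dots> = fls_nth (D i0) (n - int d0 + int i0) * Q i0 d0"
  proof (rule sum_single)
    show "d0 \<in> {..M}" by (simp add: M_def)
    fix d assume "d \<in> {..M}" "d \<noteq> d0"
    show "fls_nth (D i0) (n - int d + int i0) * Q i0 d = 0"
    proof (cases "d < d0")
      case True thus ?thesis by (simp add: Qdlt)
    next
      case False
      hence "n - int d + int i0 < fls_subdegree (D i0)" using \<open>d \<noteq> d0\<close> by (simp add: n_def t0_def)
      thus ?thesis by simp
    qed
  qed simp
  also have "\<dots> \<noteq> 0" using Dt0 Qd0 by (simp add: n_def)
  finally show ?thesis by metis
qed

lemma diffpow_ne: "diffpow k \<noteq> (\<lambda>_ _. 0)"
proof
  assume "diffpow k = (\<lambda>_ _. 0)"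
  hence "diffpow k k 0 = 0" by simp
  thus False by (simp add: diffpow_def)
qed

theorem lemma4p4:
  fixes sc :: "complex \<Rightarrow> 'w::ab_group_add \<Rightarrow> 'w" and \<phi> :: "complex fls fps"
  assumes "vector_space sc"
    and "is_associate \<phi>"
    and "\<phi> \<noteq> fps_const fls_X"
  shows "(\<forall>A. A \<subseteq> E_set sc \<and> compatible_set sc A \<longrightarrow> phi_quasi_compatible_set sc \<phi> A)
       \<and> (\<forall>A. A \<subseteq> E_set sc \<and> quasi_compatible_set sc A \<longrightarrow> phi_quasi_compatible_set sc \<phi> A)"
proof -
  have h0: "\<phi> $ 0 = fls_X" using assms(2) by (simp add: is_associate_def)
  have q: "quasi_compatible_seq sc as \<Longrightarrow> phi_quasi_compatible_seq sc \<phi> as" for as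
    unfolding quasi_compatible_seq_def phi_quasi_compatible_seq_def
    using main_inj[OF _ h0 assms(3)] by blast
  have c: "compatible_seq sc as \<Longrightarrow> quasi_compatible_seq sc as" for as
    unfolding quasi_compatible_seq_def compatible_seq_def using diffpow_ne by blast
  show ?thesis
    unfolding compatible_set_def quasi_compatible_set_def phi_quasi_compatible_set_def
    using q c by blast
qed

end
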